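(* Let $\Omega$ be a domain in $\mathscr H$ and $\alpha\in\{0,1\}$. Then: (1) $d_0^2=d_1^2=0$ on $C_0^\infty(\Omega,\wedge^p\mathbb C^{2n})$; (2) $d_0d_1=-d_1d_0$; (3) for $F\in C_0^\infty(\Omega,\wedge^p\mathbb C^{2n})$ and $G\in C_0^\infty(\Omega,\wedge^q\mathbb C^{2n})$, $d_\alpha(F\wedge G)=d_\alpha F\wedge G+(-1)^pF\wedge d_\alpha G$.
   Context: $\mathscr H=\mathbb R^{4n}\times\mathbb R$ with product $(x,t)\cdot(y,s)=\big(x+y,\,t+s+2\sum_{l=1}^{2n}(x_{2l-1}y_{2l}-x_{2l}y_{2l-1})\big)$ and vector fields $X_{2l-1}=\partial_{x_{2l-1}}-2x_{2l}\partial_t$, $X_{2l}=\partial_{x_{2l}}+2x_{2l-1}\partial_t$ ($l=1,\dots,2n$). With $\mathbf i$ the complex imaginary unit, for $l=0,\dots,n-1$ define $Z_{l0'}=X_{4l+1}+\mathbf iX_{4l+2}$, $Z_{l1'}=-X_{4l+3}-\mathbf iX_{4l+4}$, $Z_{(n+l)0'}=X_{4l+3}-\mathbf iX_{4l+4}$, $Z_{(n+l)1'}=X_{4l+1}-\mathbf iX_{4l+2}$. Fix a basis $\omega^0,\dots,\omega^{2n-1}$ of $\mathbb C^{2n}$; for $F=\sum_If_I\omega^I$ ($\omega^I=\omega^{i_1}\wedge\cdots\wedge\omega^{i_p}$) define $d_\alpha F=\sum_I\sum_{A=0}^{2n-1}Z_{A\alpha'}f_I\,\omega^A\wedge\omega^I$,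 $\alpha=0,1$. *)

theory Defs
  imports "HOL-Analysis.Analysis"
begin

text \<open>A point (x,t) of H = R^(4n) x R is encoded as p :: nat => real with
  p 0 = t, p j = x_j for 1 <= j <= 4n, and p j = 0 for j > 4n.
  The type nat => real carries the product topology (Function_Topology);
  on heis_space n this is the Euclidean topology of R^(4n+1).\<close>

definition heis_space :: "nat \<Rightarrow> (nat \<Rightarrow> real) set" where
  "heis_space n = {p. \<forall>j>4*n. p j = 0}"

definition heis_domain :: "nat \<Rightarrow> (nat \<Rightarrow> real) set \<Rightarrow> bool" where
  "heis_domain n \<Omega> \<longleftrightarrow> \<Omega> \<noteq> {} \<and> \<Omega> \<subseteq> heis_space n \<and>
     openin (top_of_set (heis_space n)) \<Omega> \<and> connected \<Omega>"

definition pd :: "nat \<Rightarrow> ((nat \<Rightarrow> real) \<Rightarrow> complex) \<Rightarrow> (nat \<Rightarrow> real) \<Rightarrow> complex" where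
  "pd j f p = vector_derivative (\<lambda>s. f (p(j := s))) (at (p j))"

fun iter_pd :: "nat list \<Rightarrow> ((nat \<Rightarrow> real) \<Rightarrow> complex) \<Rightarrow> (nat \<Rightarrow> real) \<Rightarrow> complex" where
  "iter_pd [] f = f"
| "iter_pd (j # js) f = pd j (iter_pd js f)"

definition smooth_on :: "nat \<Rightarrow> (nat \<Rightarrow> real) set \<Rightarrow> ((nat \<Rightarrow> real) \<Rightarrow> complex) \<Rightarrow> bool" where
  "smooth_on n \<Omega> f \<longleftrightarrow>
     (\<forall>js. set js \<subseteq> {0..4*n} \<longrightarrow>
        continuous_on \<Omega> (iter_pd js f) \<and>
        (\<forall>p\<in>\<Omega>. \<forall>j\<in>{0..4*n}. (\<lambda>s. iter_pd js f (p(j := s))) differentiable (at (p j))))"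

definition compact_support_in :: "(nat \<Rightarrow> real) set \<Rightarrow> ((nat \<Rightarrow> real) \<Rightarrow> complex) \<Rightarrow> bool" where
  "compact_support_in \<Omega> f \<longleftrightarrow>
     compact (closure {p\<in>\<Omega>. f p \<noteq> 0}) \<and> closure {p\<in>\<Omega>. f p \<noteq> 0} \<subseteq> \<Omega>"

definition Xf :: "nat \<Rightarrow> ((nat \<Rightarrow> real) \<Rightarrow> complex) \<Rightarrow> (nat \<Rightarrow> real) \<Rightarrow> complex" where
  "Xf k f p = (if odd k then pd k f p - 2 * complex_of_real (p (k + 1)) * pd 0 f p
               else pd k f p + 2 * complex_of_real (p (k - 1)) * pd 0 f p)"

definition Zf :: "nat \<Rightarrow> nat \<Rightarrow> nat \<Rightarrow> ((nat \<Rightarrow> real) \<Rightarrow> complex) \<Rightarrow> (nat \<Rightarrow> real) \<Rightarrow> complex" where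
  "Zf n A \<alpha> f p =
     (if A < n then
        (if \<alpha> = 0 then Xf (4*A+1) f p + \<i> * Xf (4*A+2) f p
         else - Xf (4*A+3) f p - \<i> * Xf (4*A+4) f p)
      else
        (if \<alpha> = 0 then Xf (4*(A-n)+3) f p - \<i> * Xf (4*(A-n)+4) f p
         else Xf (4*(A-n)+1) f p - \<i> * Xf (4*(A-n)+2) f p))"

text \<open>A form F = sum_I f_I omega^I is encoded by its coefficients: F I is the
  coefficient of omega^I = omega^{i_1} ^ ... ^ omega^{i_p}, with I = {i_1 < ... < i_p}
  a subset of {0..<2n}.\<close>
type_synonym hform = "nat set \<Rightarrow> (nat \<Rightarrow> real) \<Rightarrow> complex"

text \<open>omega^I ^ omega^J = shuffle_sign I J * omega^(I \<union> J) for disjoint I, J.\<close>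
definition shuffle_sign :: "nat set \<Rightarrow> nat set \<Rightarrow> complex" where
  "shuffle_sign I J = (-1) ^ card {(i, j). i \<in> I \<and> j \<in> J \<and> j < i}"

definition wedge :: "hform \<Rightarrow> hform \<Rightarrow> hform" where
  "wedge F G = (\<lambda>K p. \<Sum>I\<in>Pow K. shuffle_sign I (K - I) * F I p * G (K - I) p)"

text \<open>d_alpha F = sum_I sum_A Z_{A alpha'} f_I omega^A ^ omega^I.\<close>
definition dop :: "nat \<Rightarrow> nat \<Rightarrow> hform \<Rightarrow> hform" where
  "dop n \<alpha> F = (\<lambda>K p. if K \<subseteq> {..<2*n} then
       (\<Sum>A\<in>K. shuffle_sign {A} (K - {A}) * Zf n A \<alpha> (F (K - {A})) p) else 0)"

definition smooth_form :: "nat \<Rightarrow> (nat \<Rightarrow> real) set \<Rightarrow> nat \<Rightarrow> hform \<Rightarrow> bool" where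
  "smooth_form n \<Omega> q F \<longleftrightarrow>
     (\<forall>I. \<not> (I \<subseteq> {..<2*n} \<and> card I = q) \<longrightarrow> F I = (\<lambda>_. 0)) \<and>
     (\<forall>I. smooth_on n \<Omega> (F I) \<and> compact_support_in \<Omega> (F I))"

end

theory Submission
  imports Defs
begin


definition dj :: "nat \<Rightarrow> (nat \<Rightarrow> real) \<Rightarrow> ((nat \<Rightarrow> real) \<Rightarrow> complex) \<Rightarrow> bool" where
  "dj j p f \<longleftrightarrow> (\<lambda>s. f (p(j := s))) differentiable (at (p j))"

lemma pd_hvd: "dj j p f \<Longrightarrow> ((\<lambda>s. f (p(j := s))) has_vector_derivative pd j f p) (at (p j))"
  unfolding dj_def pd_def using vector_derivative_works by blast

lemma pd_eqI: "((\<lambda>s. f (p(j := s))) has_vector_derivative D) (at (p j)) \<Longrightarrow> pd j f p = D"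
  unfolding pd_def by (rule vector_derivative_at)

lemma dj_I: "((\<lambda>s. f (p(j := s))) has_vector_derivative D) (at (p j)) \<Longrightarrow> dj j p f"
  unfolding dj_def using differentiableI_vector by blast

lemma hvd_add: "dj j p f \<Longrightarrow> dj j p g \<Longrightarrow>
   ((\<lambda>s. f (p(j := s)) + g (p(j := s))) has_vector_derivative pd j f p + pd j g p) (at (p j))"
  by (intro has_vector_derivative_add pd_hvd)

lemma pd_add: "dj j p f \<Longrightarrow> dj j p g \<Longrightarrow> pd j (\<lambda>q. f q + g q) p = pd j f p + pd j g p"
  by (rule pd_eqI[OF hvd_add]) assumption+
lemma dj_add: "dj j p f \<Longrightarrow> dj j p g \<Longrightarrow> dj j p (\<lambda>q. f q + g q)"
  by (rule dj_I[OF hvd_add]) assumption+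

lemma hvd_diff: "dj j p f \<Longrightarrow> dj j p g \<Longrightarrow>
   ((\<lambda>s. f (p(j := s)) - g (p(j := s))) has_vector_derivative pd j f p - pd j g p) (at (p j))"
  by (intro has_vector_derivative_diff pd_hvd)
lemma pd_diff: "dj j p f \<Longrightarrow> dj j p g \<Longrightarrow> pd j (\<lambda>q. f q - g q) p = pd j f p - pd j g p"
  by (rule pd_eqI[OF hvd_diff]) assumption+
lemma dj_diff: "dj j p f \<Longrightarrow> dj j p g \<Longrightarrow> dj j p (\<lambda>q. f q - g q)"
  by (rule dj_I[OF hvd_diff]) assumption+

lemma hvd_mult: "dj j p f \<Longrightarrow> dj j p g \<Longrightarrow>
   ((\<lambda>s. f (p(j := s)) * g (p(j := s))) has_vector_derivative pd j f p * g p + f p * pd j g p) (at (p j))"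
  by (rule has_vector_derivative_mult[OF pd_hvd pd_hvd, THEN has_vector_derivative_eq_rhs]) (auto simp: algebra_simps)
lemma pd_mult: "dj j p f \<Longrightarrow> dj j p g \<Longrightarrow> pd j (\<lambda>q. f q * g q) p = pd j f p * g p + f p * pd j g p"
  by (rule pd_eqI[OF hvd_mult]) assumption+
lemma dj_mult: "dj j p f \<Longrightarrow> dj j p g \<Longrightarrow> dj j p (\<lambda>q. f q * g q)"
  by (rule dj_I[OF hvd_mult]) assumption+

lemma hvd_const: "((\<lambda>s. (c::complex)) has_vector_derivative 0) (at x)"
  by (rule derivative_eq_intros) auto
lemma pd_const: "pd j (\<lambda>q. c) p = 0"
  by (rule pd_eqI[OF hvd_const])
lemma dj_const: "dj j p (\<lambda>q. c)"
  by (rule dj_I[OF hvd_const])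

lemma hvd_coord: "((\<lambda>s. complex_of_real ((p(j := s)) m)) has_vector_derivative (if j = m then 1 else 0)) (at (p j))"
proof (cases "j = m")
  case True
  have "((\<lambda>s. complex_of_real s) has_vector_derivative 1) (at (p j))"
    using has_vector_derivative_of_real[OF DERIV_ident] by simp
  then show ?thesis using True by simp
next
  case False then show ?thesis by (simp add: hvd_const)
qed
lemma pd_coord: "pd j (\<lambda>q. complex_of_real (q m)) p = (if j = m then 1 else 0)"
  by (rule pd_eqI) (rule hvd_coord)
lemma dj_coord: "dj j p (\<lambda>q. complex_of_real (q m))"
  by (rule dj_I) (rule hvd_coord)

lemma pd_cmult: "dj j p f \<Longrightarrow> pd j (\<lambda>q. c * f q) p = c * pd j f p"
  using pd_mult[OF dj_const, of j p f c] by (simp add: pd_const)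
lemma dj_cmult: "dj j p f \<Longrightarrow> dj j p (\<lambda>q. c * f q)"
  by (rule dj_mult[OF dj_const])

lemma dj_sum: "finite S \<Longrightarrow> (\<And>i. i \<in> S \<Longrightarrow> dj j p (g i)) \<Longrightarrow> dj j p (\<lambda>q. \<Sum>i\<in>S. g i q)
   \<and> pd j (\<lambda>q. \<Sum>i\<in>S. g i q) p = (\<Sum>i\<in>S. pd j (g i) p)"
proof (induction S rule: finite_induct)
  case empty then show ?case by (simp add: dj_const pd_const)
next
  case (insert x F)
  then show ?case by (simp add: dj_add pd_add)
qed



lemma mvi:
  fixes f f' :: "real \<Rightarrow> complex"
  assumes "a \<le> b" and d: "\<And>x. x \<in> {a..b} \<Longrightarrow> (f has_vector_derivative f' x) (at x)"
    and bd: "\<And>x. x \<in> {a..b} \<Longrightarrow> norm (f' x) \<le> B"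
  shows "norm (f b - f a) \<le> B * (b - a)"
proof (cases "a = b")
  case True then show ?thesis by simp
next
  case False
  then have ab: "a < b" using assms(1) by simp
  have cont: "continuous_on {a..b} f"
    by (rule continuous_at_imp_continuous_on) (use d has_vector_derivative_continuous in blast)
  have "\<exists>x\<in>{a<..<b}. norm (f b - f a) \<le> norm ((\<lambda>t. t *\<^sub>R f' x) (b - a))"
    by (rule mvt_general[OF ab cont]) (use d in \<open>auto simp: has_vector_derivative_def\<close>)
  then obtain x where x: "x \<in> {a<..<b}" "norm (f b - f a) \<le> norm ((b - a) *\<^sub>R f' x)" by blast
  have "norm ((b - a) *\<^sub>R f' x) = (b - a) * norm (f' x)" using ab by simp
  also have "\<dots> \<le> (b - a) * B" using bd[of x] x(1) ab by (intro mult_left_mono) auto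
  finally show ?thesis using x(2) by (simp add: mult.commute)
qed

lemma schwarz_core:
  fixes g gA gB gAB gBA :: "real \<Rightarrow> real \<Rightarrow> complex"
  assumes d0: "d > 0"
    and box: "\<And>s r. \<bar>s - a\<bar> < d \<Longrightarrow> \<bar>r - b\<bar> < d \<Longrightarrow>
       ((\<lambda>s'. g s' r) has_vector_derivative gA s r) (at s) \<and>
       ((\<lambda>r'. g s r') has_vector_derivative gB s r) (at r) \<and>
       ((\<lambda>r'. gA s r') has_vector_derivative gAB s r) (at r) \<and>
       ((\<lambda>s'. gB s' r) has_vector_derivative gBA s r) (at s)"
    and c12: "\<And>e. e > 0 \<Longrightarrow> \<exists>\<delta>>0. \<forall>s r. \<bar>s - a\<bar> < \<delta> \<longrightarrow> \<bar>r - b\<bar> < \<delta> \<longrightarrow> norm (gAB s r - gAB a b) \<le> e"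
    and c21: "\<And>e. e > 0 \<Longrightarrow> \<exists>\<delta>>0. \<forall>s r. \<bar>s - a\<bar> < \<delta> \<longrightarrow> \<bar>r - b\<bar> < \<delta> \<longrightarrow> norm (gBA s r - gBA a b) \<le> e"
  shows "gAB a b = gBA a b"
proof -
  define c where "c = gAB a b"
  define c' where "c' = gBA a b"
  have main: "norm (c - c') \<le> 2 * e" if e: "e > 0" for e
  proof -
    obtain \<delta>1 where d1: "\<delta>1 > 0" "\<forall>s r. \<bar>s - a\<bar> < \<delta>1 \<longrightarrow> \<bar>r - b\<bar> < \<delta>1 \<longrightarrow> norm (gAB s r - c) \<le> e"
      using c12[OF e] unfolding c_def by blast
    obtain \<delta>2 where d2: "\<delta>2 > 0" "\<forall>s r. \<bar>s - a\<bar> < \<delta>2 \<longrightarrow> \<bar>r - b\<bar> < \<delta>2 \<longrightarrow> norm (gBA s r - c') \<le> e"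
      using c21[OF e] unfolding c'_def by blast
    define h where "h = min d (min \<delta>1 \<delta>2) / 2"
    have h0: "h > 0" using d0 d1 d2 by (simp add: h_def)
    have hd: "h < d" "h < \<delta>1" "h < \<delta>2" using h0 by (auto simp: h_def)
    have inb: "\<bar>s - a\<bar> < d \<and> \<bar>s - a\<bar> < \<delta>1 \<and> \<bar>s - a\<bar> < \<delta>2" if "s \<in> {a..a+h}" for s
      using that h0 d0 d1 d2 by (auto simp: h_def)
    have inb2: "\<bar>r - b\<bar> < d \<and> \<bar>r - b\<bar> < \<delta>1 \<and> \<bar>r - b\<bar> < \<delta>2" if "r \<in> {b..b+h}" for r
      using that h0 d0 d1 d2 by (auto simp: h_def)
    define \<Delta> where "\<Delta> = g (a+h) (b+h) - g (a+h) b - g a (b+h) + g a b"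
    have cl1: "norm (\<Delta> - of_real (h*h) * c) \<le> e * h * h"
    proof -
      define \<psi> where "\<psi> = (\<lambda>s. g s (b+h) - g s b - of_real s * of_real h * c)"
      have dpsi: "(\<psi> has_vector_derivative (gA s (b+h) - gA s b - of_real h * c)) (at s)"
        if "s \<in> {a..a+h}" for s
      proof -
        have "((\<lambda>s. of_real s * of_real h * c) has_vector_derivative of_real h * c) (at s)"
          by (rule has_vector_derivative_mult_left[OF has_vector_derivative_mult_left[OF
               has_vector_derivative_of_real[OF DERIV_ident]], THEN has_vector_derivative_eq_rhs]) simp
        then show ?thesis unfolding \<psi>_def
          using box[of s "b+h"] box[of s b] inb[OF that] h0 hd
          by (intro has_vector_derivative_diff) auto
      qed
      have bpsi: "norm (gA s (b+h) - gA s b - of_real h * c) \<le> e * h" if s: "s \<in> {a..a+h}" for s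
      proof -
        define ch where "ch = (\<lambda>r. gA s r - of_real r * c)"
        have "norm (ch (b+h) - ch b) \<le> e * ((b+h) - b)"
        proof (rule mvi)
          fix r assume r: "r \<in> {b..b+h}"
          have "((\<lambda>r. of_real r * c) has_vector_derivative c) (at r)"
            by (rule has_vector_derivative_mult_left[OF
               has_vector_derivative_of_real[OF DERIV_ident], THEN has_vector_derivative_eq_rhs]) simp
          then show "(ch has_vector_derivative (gAB s r - c)) (at r)" unfolding ch_def
            using box[of s r] inb[OF s] inb2[OF r] by (intro has_vector_derivative_diff) auto
          show "norm (gAB s r - c) \<le> e" using d1(2) inb[OF s] inb2[OF r] by blast
        qed (use h0 in auto)
        moreover have "ch (b+h) - ch b = gA s (b+h) - gA s b - of_real h * c"
          unfolding ch_def by (simp add: algebra_simps)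
        ultimately show ?thesis by simp
      qed
      have "norm (\<psi> (a+h) - \<psi> a) \<le> (e * h) * ((a+h) - a)"
        by (rule mvi) (use h0 dpsi bpsi in auto)
      moreover have "\<psi> (a+h) - \<psi> a = \<Delta> - of_real (h*h) * c"
        unfolding \<psi>_def \<Delta>_def by (simp add: algebra_simps)
      ultimately show ?thesis by simp
    qed
    have cl2: "norm (\<Delta> - of_real (h*h) * c') \<le> e * h * h"
    proof -
      define \<psi> where "\<psi> = (\<lambda>r. g (a+h) r - g a r - of_real r * of_real h * c')"
      have dpsi: "(\<psi> has_vector_derivative (gB (a+h) r - gB a r - of_real h * c')) (at r)"
        if "r \<in> {b..b+h}" for r
      proof -
        have "((\<lambda>s. of_real s * of_real h * c') has_vector_derivative of_real h * c') (at r)"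
          by (rule has_vector_derivative_mult_left[OF has_vector_derivative_mult_left[OF
               has_vector_derivative_of_real[OF DERIV_ident]], THEN has_vector_derivative_eq_rhs]) simp
        then show ?thesis unfolding \<psi>_def
          using box[of "a+h" r] box[of a r] inb2[OF that] h0 d0 hd
          by (intro has_vector_derivative_diff) auto
      qed
      have bpsi: "norm (gB (a+h) r - gB a r - of_real h * c') \<le> e * h" if r: "r \<in> {b..b+h}" for r
      proof -
        define ch where "ch = (\<lambda>s. gB s r - of_real s * c')"
        have "norm (ch (a+h) - ch a) \<le> e * ((a+h) - a)"
        proof (rule mvi)
          fix s assume s: "s \<in> {a..a+h}"
          have "((\<lambda>r. of_real r * c') has_vector_derivative c') (at s)"
            by (rule has_vector_derivative_mult_left[OF
               has_vector_derivative_of_real[OF DERIV_ident], THEN has_vector_derivative_eq_rhs]) simp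
          then show "(ch has_vector_derivative (gBA s r - c')) (at s)" unfolding ch_def
            using box[of s r] inb[OF s] inb2[OF r] by (intro has_vector_derivative_diff) auto
          show "norm (gBA s r - c') \<le> e" using d2(2) inb[OF s] inb2[OF r] by blast
        qed (use h0 in auto)
        moreover have "ch (a+h) - ch a = gB (a+h) r - gB a r - of_real h * c'"
          unfolding ch_def by (simp add: algebra_simps)
        ultimately show ?thesis by simp
      qed
      have "norm (\<psi> (b+h) - \<psi> b) \<le> (e * h) * ((b+h) - b)"
        by (rule mvi) (use h0 dpsi bpsi in auto)
      moreover have "\<psi> (b+h) - \<psi> b = \<Delta> - of_real (h*h) * c'"
        unfolding \<psi>_def \<Delta>_def by (simp add: algebra_simps)
      ultimately show ?thesis by simp
    qed
    have "norm (of_real (h*h) * (c - c')) \<le> norm (\<Delta> - of_real (h*h) * c') + norm (\<Delta> - of_real (h*h) * c)"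
      by (rule order_trans[OF _ norm_triangle_ineq4]) (simp add: algebra_simps)
    also have "\<dots> \<le> 2 * e * (h * h)" using cl1 cl2 by simp
    finally have *: "norm (of_real (h*h) * (c - c')) \<le> (h*h) * (2 * e)" by (simp add: algebra_simps)
    have "norm (of_real (h*h) * (c - c')) = (h*h) * norm (c - c')"
      using h0 by (simp add: norm_mult)
    with * have "(h*h) * norm (c - c') \<le> (h*h) * (2 * e)" by simp
    moreover have "h * h > 0" using h0 by simp
    ultimately show ?thesis by (simp add: mult_le_cancel_left)
  qed
  show ?thesis
  proof (rule ccontr)
    assume "gAB a b \<noteq> gBA a b"
    then have "norm (c - c') > 0" by (simp add: c_def c'_def)
    then have "norm (c - c') \<le> 2 * (norm (c - c') / 4)" using main[of "norm (c - c') / 4"] by simp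
    then show False using \<open>norm (c - c') > 0\<close> by simp
  qed
qed



lemma box_in_ball:
  fixes a b s r :: real
  assumes "\<bar>s - a\<bar> < d/2" "\<bar>r - b\<bar> < d/2"
  shows "dist (s, r) (a, b) < d"
proof -
  have "dist (s, r) (a, b) = sqrt ((dist s a)\<^sup>2 + (dist r b)\<^sup>2)" by (rule dist_Pair_Pair)
  also have "\<dots> \<le> \<bar>dist s a\<bar> + \<bar>dist r b\<bar>" by (rule sqrt_sum_squares_le_sum_abs)
  also have "\<dots> < d" using assms by (simp add: dist_real_def)
  finally show ?thesis .
qed

lemma cont_box:
  fixes H :: "real \<times> real \<Rightarrow> complex"
  assumes "isCont H (a, b)" "e > 0"
  shows "\<exists>\<delta>>0. \<forall>s r. \<bar>s - a\<bar> < \<delta> \<longrightarrow> \<bar>r - b\<bar> < \<delta> \<longrightarrow> norm (H (s, r) - H (a, b)) \<le> e"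
proof -
  obtain d where d: "d > 0" "\<forall>x'. dist x' (a, b) < d \<longrightarrow> dist (H x') (H (a, b)) < e"
    using assms unfolding continuous_at_eps_delta by blast
  show ?thesis
    by (rule exI[of _ "d/2"]) (use d box_in_ball in \<open>auto simp: dist_norm intro: less_imp_le\<close>)
qed

lemma upd_twist: "k \<noteq> l \<Longrightarrow> (p(k := s, l := r))(k := s') = p(k := s', l := r)"
  by (rule ext) auto

lemma schwarz_pd:
  assumes dom: "heis_domain n \<Omega>" and sm: "smooth_on n \<Omega> f" and p: "p \<in> \<Omega>"
    and kl: "k \<le> 4*n" "l \<le> 4*n"
  shows "pd k (pd l f) p = pd l (pd k f) p"
proof (cases "k = l")
  case True then show ?thesis by simp
next
  case kl_ne: False
  define \<phi> where "\<phi> = (\<lambda>z::real\<times>real. p(k := fst z, l := snd z))"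
  define a where "a = p k"
  define b where "b = p l"
  have phiab: "\<phi> (a, b) = p" unfolding \<phi>_def a_def b_def by simp
  obtain U where U: "open U" "\<Omega> = heis_space n \<inter> U"
    using dom unfolding heis_domain_def openin_open by blast
  have pH: "p \<in> heis_space n" using p U by blast
  have phiH: "\<phi> z \<in> heis_space n" for z
    using pH kl unfolding \<phi>_def heis_space_def by auto
  have contphi: "continuous_on UNIV \<phi>"
  proof (rule continuous_on_coordinatewise_then_product)
    fix i
    have eq: "(\<lambda>z. \<phi> z i) = (if i = l then snd else if i = k then fst else (\<lambda>z::real\<times>real. p i))"
      unfolding \<phi>_def by (rule ext) auto
    show "continuous_on UNIV (\<lambda>z. \<phi> z i)" unfolding eq
      by (auto intro: continuous_on_snd continuous_on_fst continuous_on_id continuous_on_const)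
  qed
  have "open (\<phi> -` U)" by (rule open_vimage[OF U(1) contphi])
  moreover have "(a, b) \<in> \<phi> -` U" using phiab p U by auto
  ultimately obtain \<epsilon> where eps: "\<epsilon> > 0" "ball (a, b) \<epsilon> \<subseteq> \<phi> -` U"
    using open_contains_ball by blast
  define d where "d = \<epsilon> / 2"
  have d0: "d > 0" using eps by (simp add: d_def)
  have inO: "\<phi> (s, r) \<in> \<Omega>" if "\<bar>s - a\<bar> < d" "\<bar>r - b\<bar> < d" for s r
  proof -
    have "dist (s, r) (a, b) < \<epsilon>" using box_in_ball[of s a \<epsilon> r b] that by (simp add: d_def)
    then have "(s, r) \<in> ball (a, b) \<epsilon>" by (simp add: dist_commute)
    then show ?thesis using eps U phiH by blast
  qed
  have phik: "\<phi> (s, r) k = s" for s r using kl_ne unfolding \<phi>_def by simp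
  have phil: "\<phi> (s, r) l = r" for s r unfolding \<phi>_def by simp
  have phiupk: "(\<phi> (s, r))(k := s') = \<phi> (s', r)" for s r s' using kl_ne unfolding \<phi>_def by (simp add: upd_twist)
  have phiupl: "(\<phi> (s, r))(l := r') = \<phi> (s, r')" for s r r' unfolding \<phi>_def by simp
  have djs: "dj j q (iter_pd js f)" if "q \<in> \<Omega>" "j \<le> 4*n" "set js \<subseteq> {0..4*n}" for q j js
    using sm that unfolding smooth_on_def dj_def by auto
  have hv: "((\<lambda>s'. h (\<phi> (s', r))) has_vector_derivative pd k h (\<phi> (s, r))) (at s) \<and>
            ((\<lambda>r'. h (\<phi> (s, r'))) has_vector_derivative pd l h (\<phi> (s, r))) (at r)"
    if "\<bar>s - a\<bar> < d" "\<bar>r - b\<bar> < d" "h = iter_pd js f" "set js \<subseteq> {0..4*n}" for s r h js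
  proof -
    have q: "\<phi> (s, r) \<in> \<Omega>" using inO that by blast
    have "dj k (\<phi> (s, r)) h" "dj l (\<phi> (s, r)) h" using djs[OF q] kl that by auto
    from pd_hvd[OF this(1)] pd_hvd[OF this(2)] show ?thesis
      by (simp add: phik phil phiupk phiupl)
  qed
  have r: "pd l (pd k f) (\<phi> (a, b)) = pd k (pd l f) (\<phi> (a, b))"
  proof (rule schwarz_core[where g = "\<lambda>s r. f (\<phi> (s, r))" and gA = "\<lambda>s r. pd k f (\<phi> (s, r))"
        and gB = "\<lambda>s r. pd l f (\<phi> (s, r))", OF d0])
    fix s r assume sr: "\<bar>s - a\<bar> < d" "\<bar>r - b\<bar> < d"
    show "((\<lambda>s'. f (\<phi> (s', r))) has_vector_derivative pd k f (\<phi> (s, r))) (at s) \<and>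
          ((\<lambda>r'. f (\<phi> (s, r'))) has_vector_derivative pd l f (\<phi> (s, r))) (at r) \<and>
          ((\<lambda>r'. pd k f (\<phi> (s, r'))) has_vector_derivative pd l (pd k f) (\<phi> (s, r))) (at r) \<and>
          ((\<lambda>s'. pd l f (\<phi> (s', r))) has_vector_derivative pd k (pd l f) (\<phi> (s, r))) (at s)"
      using hv[OF sr, of f "[]"] hv[OF sr, of "pd k f" "[k]"] hv[OF sr, of "pd l f" "[l]"] kl by auto
  next
    have Vopen: "open {z::real\<times>real. \<bar>fst z - a\<bar> < d \<and> \<bar>snd z - b\<bar> < d}"
      by (intro open_Collect_conj open_Collect_less continuous_intros)
    have ab_in: "(a, b) \<in> {z::real\<times>real. \<bar>fst z - a\<bar> < d \<and> \<bar>snd z - b\<bar> < d}" using d0 by simp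
    have img: "\<phi> ` {z::real\<times>real. \<bar>fst z - a\<bar> < d \<and> \<bar>snd z - b\<bar> < d} \<subseteq> \<Omega>"
      using inO by auto
    have ic: "isCont (\<lambda>z. iter_pd js f (\<phi> z)) (a, b)" if "set js \<subseteq> {0..4*n}" for js
    proof -
      have "continuous_on \<Omega> (iter_pd js f)" using sm that unfolding smooth_on_def by blast
      then have "continuous_on {z::real\<times>real. \<bar>fst z - a\<bar> < d \<and> \<bar>snd z - b\<bar> < d} (\<lambda>z. iter_pd js f (\<phi> z))"
        by (rule continuous_on_compose2[OF _ continuous_on_subset[OF contphi] img]) simp
      then show ?thesis using Vopen ab_in continuous_on_eq_continuous_at by blast
    qed
    fix e :: real assume e: "e > 0"
    show "\<exists>\<delta>>0. \<forall>s r. \<bar>s - a\<bar> < \<delta> \<longrightarrow> \<bar>r - b\<bar> < \<delta> \<longrightarrow>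
        norm (pd l (pd k f) (\<phi> (s, r)) - pd l (pd k f) (\<phi> (a, b))) \<le> e"
      using cont_box[OF ic[of "[l, k]"] e] kl by simp
    show "\<exists>\<delta>>0. \<forall>s r. \<bar>s - a\<bar> < \<delta> \<longrightarrow> \<bar>r - b\<bar> < \<delta> \<longrightarrow>
        norm (pd k (pd l f) (\<phi> (s, r)) - pd k (pd l f) (\<phi> (a, b))) \<le> e"
      using cont_box[OF ic[of "[k, l]"] e] kl by simp
  qed
  then show ?thesis using phiab by simp
qed



definition pt :: "nat \<Rightarrow> nat" where "pt k = (if odd k then k + 1 else k - 1)"
definition sg :: "nat \<Rightarrow> complex" where "sg k = (if odd k then -2 else 2)"

lemma Xf_alt: "Xf k f p = pd k f p + sg k * of_real (p (pt k)) * pd 0 f p"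
  unfolding Xf_def sg_def pt_def by auto

lemma Xf_fun: "Xf k f = (\<lambda>q. pd k f q + sg k * of_real (q (pt k)) * pd 0 f q)"
  by (rule ext) (rule Xf_alt)

lemma dj_X: "dj j p (pd k f) \<Longrightarrow> dj j p (pd 0 f) \<Longrightarrow> dj j p (Xf k f)"
  unfolding Xf_fun by (intro dj_add dj_mult dj_cmult dj_coord dj_const) auto

lemma pd_X: "dj j p (pd k f) \<Longrightarrow> dj j p (pd 0 f) \<Longrightarrow>
  pd j (Xf k f) p = pd j (pd k f) p + sg k * ((if j = pt k then 1 else 0) * pd 0 f p
     + of_real (p (pt k)) * pd j (pd 0 f) p)"
  unfolding Xf_fun
  by (simp add: pd_add pd_mult pd_cmult pd_coord dj_add dj_mult dj_cmult dj_coord dj_const pd_const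
      algebra_simps)

lemma pt_pos: "k \<ge> 1 \<Longrightarrow> pt k \<noteq> 0"
  unfolding pt_def by auto

definition good :: "nat \<Rightarrow> (nat \<Rightarrow> real) \<Rightarrow> ((nat \<Rightarrow> real) \<Rightarrow> complex) \<Rightarrow> bool" where
  "good n p f \<longleftrightarrow> (\<forall>j\<le>4*n. dj j p f)"

lemma smooth_good:
  assumes "smooth_on n \<Omega> f" "p \<in> \<Omega>" "set js \<subseteq> {0..4*n}"
  shows "good n p (iter_pd js f)"
  using assms unfolding smooth_on_def good_def dj_def by auto

lemma smooth_good1: "smooth_on n \<Omega> f \<Longrightarrow> p \<in> \<Omega> \<Longrightarrow> good n p f"
  using smooth_good[of n \<Omega> f p "[]"] by simp
lemma smooth_good2: "smooth_on n \<Omega> f \<Longrightarrow> p \<in> \<Omega> \<Longrightarrow> k \<le> 4*n \<Longrightarrow> good n p (pd k f)"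
  using smooth_good[of n \<Omega> f p "[k]"] by simp

definition cm :: "nat \<Rightarrow> nat \<Rightarrow> complex" where
  "cm k l = sg l * (if k = pt l then 1 else 0) - sg k * (if l = pt k then 1 else 0)"

lemma Xcomm:
  assumes dom: "heis_domain n \<Omega>" and sm: "smooth_on n \<Omega> f" and p: "p \<in> \<Omega>"
    and kl: "1 \<le> k" "k \<le> 4*n" "1 \<le> l" "l \<le> 4*n"
  shows "Xf k (Xf l f) p - Xf l (Xf k f) p = cm k l * pd 0 f p"
proof -
  have g: "dj j p (pd i f)" if "j \<le> 4*n" "i \<le> 4*n" for i j
    using smooth_good2[OF sm p that(2)] that(1) unfolding good_def by blast
  have g0: "dj j p f" if "j \<le> 4*n" for j
    using smooth_good1[OF sm p] that unfolding good_def by blast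
  have XX: "Xf a (Xf b f) p = pd a (pd b f) p + sg b * ((if a = pt b then 1 else 0) * pd 0 f p
     + of_real (p (pt b)) * pd a (pd 0 f) p) + sg a * of_real (p (pt a)) *
     (pd 0 (pd b f) p + sg b * (of_real (p (pt b)) * pd 0 (pd 0 f) p))"
    if "1 \<le> a" "a \<le> 4*n" "1 \<le> b" "b \<le> 4*n" for a b
    using that pt_pos[of b]
    by (subst Xf_alt) (simp add: pd_X g)
  have s1: "pd k (pd l f) p = pd l (pd k f) p" by (rule schwarz_pd[OF dom sm p]) (use kl in auto)
  have s2: "pd k (pd 0 f) p = pd 0 (pd k f) p" by (rule schwarz_pd[OF dom sm p]) (use kl in auto)
  have s3: "pd l (pd 0 f) p = pd 0 (pd l f) p" by (rule schwarz_pd[OF dom sm p]) (use kl in auto)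
  show ?thesis
    using kl by (simp add: XX s1 s2 s3 cm_def algebra_simps)
qed



definition zk :: "nat \<Rightarrow> nat \<Rightarrow> nat \<Rightarrow> nat" where
  "zk n A \<alpha> = (if A < n then (if \<alpha> = 0 then 4*A+1 else 4*A+3) else (if \<alpha> = 0 then 4*(A-n)+3 else 4*(A-n)+1))"
definition zc1 :: "nat \<Rightarrow> nat \<Rightarrow> nat \<Rightarrow> complex" where
  "zc1 n A \<alpha> = (if A < n then (if \<alpha> = 0 then 1 else -1) else 1)"
definition zc2 :: "nat \<Rightarrow> nat \<Rightarrow> nat \<Rightarrow> complex" where
  "zc2 n A \<alpha> = (if A < n then (if \<alpha> = 0 then \<i> else -\<i>) else -\<i>)"

lemma Zf_alt: "Zf n A \<alpha> f p = zc1 n A \<alpha> * Xf (zk n A \<alpha>) f p + zc2 n A \<alpha> * Xf (zk n A \<alpha> + 1) f p"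
proof -
  have "- Xf (4*A+3) f p - \<i> * Xf (4*A+4) f p = (-1) * Xf (4*A+3) f p + (-\<i>) * Xf (4*A+3+1) f p"
    by (simp add: numeral_eq_Suc)
  moreover have "Xf (4*m+k) f p - \<i> * Xf (4*m+k+1) f p = 1 * Xf (4*m+k) f p + (-\<i>) * Xf (4*m+k+1) f p" for m k
    by simp
  moreover have "Xf (4*A+1) f p + \<i> * Xf (4*A+2) f p = 1 * Xf (4*A+1) f p + \<i> * Xf (4*A+1+1) f p"
    by (simp add: numeral_eq_Suc)
  ultimately show ?thesis
    unfolding Zf_def zk_def zc1_def zc2_def by (simp add: numeral_eq_Suc add_ac)
qed

lemma Zf_fun: "Zf n A \<alpha> f = (\<lambda>q. zc1 n A \<alpha> * Xf (zk n A \<alpha>) f q + zc2 n A \<alpha> * Xf (zk n A \<alpha> + 1) f q)"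
  by (rule ext) (rule Zf_alt)

lemma zk_bnd: "A < 2*n \<Longrightarrow> 1 \<le> zk n A \<alpha> \<and> zk n A \<alpha> + 1 \<le> 4*n"
  unfolding zk_def by auto

lemma Xf_sum:
  assumes "finite S" "\<And>i. i \<in> S \<Longrightarrow> good n p (g i)" "k \<le> 4*n"
  shows "Xf k (\<lambda>q. \<Sum>i\<in>S. c i * g i q) p = (\<Sum>i\<in>S. c i * Xf k (g i) p)"
proof -
  have d: "dj j p (\<lambda>q. c i * g i q)" if "i \<in> S" "j \<le> 4*n" for i j
    using assms(2)[OF that(1)] that(2) unfolding good_def by (simp add: dj_cmult)
  have e: "pd j (\<lambda>q. \<Sum>i\<in>S. c i * g i q) p = (\<Sum>i\<in>S. c i * pd j (g i) p)" if "j \<le> 4*n" for j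
    using dj_sum[OF assms(1), of j p "\<lambda>i q. c i * g i q"] d[OF _ that] assms(2) that
    by (auto simp: pd_cmult good_def intro!: sum.cong)
  show ?thesis
    unfolding Xf_alt using assms(3) by (simp add: e sum.distrib sum_distrib_left algebra_simps)
qed

lemma good_sum: "finite S \<Longrightarrow> (\<And>i. i \<in> S \<Longrightarrow> good n p (g i)) \<Longrightarrow> good n p (\<lambda>q. \<Sum>i\<in>S. c i * g i q)"
  unfolding good_def using dj_sum[of S _ p "\<lambda>i q. c i * g i q"] by (auto simp: dj_cmult)

lemma good_mult: "good n p f \<Longrightarrow> good n p g \<Longrightarrow> good n p (\<lambda>q. f q * g q)"
  unfolding good_def by (auto simp: dj_mult)

lemma Xf_mult:
  assumes "good n p f" "good n p g" "k \<le> 4*n"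
  shows "Xf k (\<lambda>q. f q * g q) p = Xf k f p * g p + f p * Xf k g p"
proof -
  have d: "dj j p f" "dj j p g" if "j \<le> 4*n" for j using assms that unfolding good_def by auto
  have e: "pd j (\<lambda>q. f q * g q) p = pd j f p * g p + f p * pd j g p" if "j \<le> 4*n" for j
    using d[OF that] by (simp add: pd_mult)
  show ?thesis unfolding Xf_alt using assms(3) by (simp add: e algebra_simps)
qed

lemma Zf_sum:
  assumes "finite S" "\<And>i. i \<in> S \<Longrightarrow> good n p (g i)" "A < 2*n"
  shows "Zf n A \<alpha> (\<lambda>q. \<Sum>i\<in>S. c i * g i q) p = (\<Sum>i\<in>S. c i * Zf n A \<alpha> (g i) p)"
  unfolding Zf_alt using zk_bnd[OF assms(3), of \<alpha>]
  by (simp add: Xf_sum[OF assms(1,2)] sum_distrib_left sum.distrib algebra_simps)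

lemma Zf_mult:
  assumes "good n p f" "good n p g" "A < 2*n"
  shows "Zf n A \<alpha> (\<lambda>q. f q * g q) p = Zf n A \<alpha> f p * g p + f p * Zf n A \<alpha> g p"
  unfolding Zf_alt using zk_bnd[OF assms(3), of \<alpha>]
  by (simp add: Xf_mult[OF assms(1,2)] algebra_simps)

lemma good_Zf:
  assumes "\<And>k. k \<le> 4*n \<Longrightarrow> good n p (pd k f)" "A < 2*n"
  shows "good n p (Zf n A \<alpha> f)"
proof -
  have b: "zk n A \<alpha> \<le> 4*n" "zk n A \<alpha> + 1 \<le> 4*n" using zk_bnd[OF assms(2), of \<alpha>] by auto
  have d: "dj j p (pd k f)" if "j \<le> 4*n" "k \<le> 4*n" for j k using assms(1)[OF that(2)] that(1) unfolding good_def by auto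
  show ?thesis unfolding good_def Zf_fun
  proof (intro allI impI)
    fix j assume j: "j \<le> 4*n"
    show "dj j p (\<lambda>q. zc1 n A \<alpha> * Xf (zk n A \<alpha>) f q + zc2 n A \<alpha> * Xf (zk n A \<alpha> + 1) f q)"
      by (intro dj_add dj_cmult dj_X d j b) simp_all
  qed
qed

lemma Zf_lin2:
  assumes "good n p g1" "good n p g2" "k \<le> 4*n"
  shows "Xf k (\<lambda>q. c1 * g1 q + c2 * g2 q) p = c1 * Xf k g1 p + c2 * Xf k g2 p"
proof -
  have d: "dj j p g1" "dj j p g2" if "j \<le> 4*n" for j using assms that unfolding good_def by auto
  have e: "pd j (\<lambda>q. c1 * g1 q + c2 * g2 q) p = c1 * pd j g1 p + c2 * pd j g2 p" if "j \<le> 4*n" for j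
    using d[OF that] by (simp add: pd_add pd_cmult dj_cmult)
  show ?thesis unfolding Xf_alt using assms(3) by (simp add: e algebra_simps)
qed

definition CZ :: "nat \<Rightarrow> nat \<Rightarrow> nat \<Rightarrow> nat \<Rightarrow> nat \<Rightarrow> complex" where
  "CZ n A \<alpha> B \<beta> = zc1 n A \<alpha> * zc1 n B \<beta> * cm (zk n A \<alpha>) (zk n B \<beta>)
     + zc1 n A \<alpha> * zc2 n B \<beta> * cm (zk n A \<alpha>) (zk n B \<beta> + 1)
     + zc2 n A \<alpha> * zc1 n B \<beta> * cm (zk n A \<alpha> + 1) (zk n B \<beta>)
     + zc2 n A \<alpha> * zc2 n B \<beta> * cm (zk n A \<alpha> + 1) (zk n B \<beta> + 1)"

lemma Zcomm:
  assumes dom: "heis_domain n \<Omega>" and sm: "smooth_on n \<Omega> f" and p: "p \<in> \<Omega>"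
    and AB: "A < 2*n" "B < 2*n"
  shows "Zf n A \<alpha> (Zf n B \<beta> f) p - Zf n B \<beta> (Zf n A \<alpha> f) p = CZ n A \<alpha> B \<beta> * pd 0 f p"
proof -
  have gX: "good n p (Xf k f)" if "k \<le> 4*n" for k
    using smooth_good2[OF sm p] that unfolding good_def by (auto intro!: dj_X)
  have ex: "Zf n C \<gamma> (Zf n D \<delta> f) p =
     zc1 n C \<gamma> * (zc1 n D \<delta> * Xf (zk n C \<gamma>) (Xf (zk n D \<delta>) f) p + zc2 n D \<delta> * Xf (zk n C \<gamma>) (Xf (zk n D \<delta> + 1) f) p)
   + zc2 n C \<gamma> * (zc1 n D \<delta> * Xf (zk n C \<gamma> + 1) (Xf (zk n D \<delta>) f) p + zc2 n D \<delta> * Xf (zk n C \<gamma> + 1) (Xf (zk n D \<delta> + 1) f) p)"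
    if "C < 2*n" "D < 2*n" for C \<gamma> D \<delta>
  proof -
    have k: "zk n D \<delta> \<le> 4*n" "zk n D \<delta> + 1 \<le> 4*n" "zk n C \<gamma> \<le> 4*n" "zk n C \<gamma> + 1 \<le> 4*n"
      using zk_bnd[OF that(1), of \<gamma>] zk_bnd[OF that(2), of \<delta>] by auto
    show ?thesis
    apply (simp only: Zf_alt[of n C \<gamma> "Zf n D \<delta> f" p])
    apply (simp only: Zf_fun[of n D \<delta> f])
    by (simp only: Zf_lin2[OF gX gX] k)
  qed
  have xc: "Xf k (Xf l f) p = Xf l (Xf k f) p + cm k l * pd 0 f p" if "1 \<le> k" "k \<le> 4*n" "1 \<le> l" "l \<le> 4*n" for k l
    using Xcomm[OF dom sm p that] by (simp add: algebra_simps)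
  have b1: "1 \<le> zk n A \<alpha>" "zk n A \<alpha> + 1 \<le> 4*n" using zk_bnd[OF AB(1)] by auto
  have b2: "1 \<le> zk n B \<beta>" "zk n B \<beta> + 1 \<le> 4*n" using zk_bnd[OF AB(2)] by auto
  note x1 = xc[of "zk n A \<alpha>" "zk n B \<beta>"] and x2 = xc[of "zk n A \<alpha>" "zk n B \<beta> + 1"]
   and x3 = xc[of "zk n A \<alpha> + 1" "zk n B \<beta>"] and x4 = xc[of "zk n A \<alpha> + 1" "zk n B \<beta> + 1"]
  have x1': "Xf (zk n A \<alpha>) (Xf (zk n B \<beta>) f) p = Xf (zk n B \<beta>) (Xf (zk n A \<alpha>) f) p + cm (zk n A \<alpha>) (zk n B \<beta>) * pd 0 f p"
    by (rule x1) (use b1 b2 in auto)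
  have x2': "Xf (zk n A \<alpha>) (Xf (zk n B \<beta> + 1) f) p = Xf (zk n B \<beta> + 1) (Xf (zk n A \<alpha>) f) p + cm (zk n A \<alpha>) (zk n B \<beta> + 1) * pd 0 f p"
    by (rule x2) (use b1 b2 in auto)
  have x3': "Xf (zk n A \<alpha> + 1) (Xf (zk n B \<beta>) f) p = Xf (zk n B \<beta>) (Xf (zk n A \<alpha> + 1) f) p + cm (zk n A \<alpha> + 1) (zk n B \<beta>) * pd 0 f p"
    by (rule x3) (use b1 b2 in auto)
  have x4': "Xf (zk n A \<alpha> + 1) (Xf (zk n B \<beta> + 1) f) p = Xf (zk n B \<beta> + 1) (Xf (zk n A \<alpha> + 1) f) p + cm (zk n A \<alpha> + 1) (zk n B \<beta> + 1) * pd 0 f p"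
    by (rule x4) (use b1 b2 in auto)
  show ?thesis
    unfolding ex[OF AB] ex[OF AB(2,1)] CZ_def
    by (simp only: x1' x2' x3' x4') (simp add: algebra_simps)
qed



definition blk :: "nat \<Rightarrow> nat \<Rightarrow> nat" where "blk n A = (if A < n then A else A - n)"
definition off :: "nat \<Rightarrow> nat \<Rightarrow> nat \<Rightarrow> nat" where
  "off n A \<alpha> = (if A < n then (if \<alpha> = 0 then 1 else 3) else (if \<alpha> = 0 then 3 else 1))"

definition off2 :: "nat \<Rightarrow> nat \<Rightarrow> nat \<Rightarrow> nat" where
  "off2 n A \<alpha> = (if A < n then (if \<alpha> = 0 then 2 else 4) else (if \<alpha> = 0 then 4 else 2))"

lemma zk_blk: "zk n A \<alpha> = 4 * blk n A + off n A \<alpha>"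
  unfolding zk_def blk_def off_def by auto
lemma zk1_blk: "zk n A \<alpha> + 1 = 4 * blk n A + off2 n A \<alpha>"
  unfolding zk_def blk_def off2_def by auto

lemma par4: "odd (4*a+(1::nat))" "\<not> odd (4*a+(2::nat))" "odd (4*a+(3::nat))" "\<not> odd (4*a+(4::nat))"
  by presburger+

lemma idx_eq:
  "(4*a+1 = 4*b+(2::nat)) = False" "(4*a+2 = 4*b+(1::nat)) = False"
  "(4*a+1 = 4*b+(3::nat)) = False" "(4*a+3 = 4*b+(1::nat)) = False"
  "(4*a+1 = 4*b+(4::nat)) = False" "(4*a+4 = 4*b+(1::nat)) = False"
  "(4*a+2 = 4*b+(3::nat)) = False" "(4*a+3 = 4*b+(2::nat)) = False"
  "(4*a+2 = 4*b+(4::nat)) = False" "(4*a+4 = 4*b+(2::nat)) = False"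
  "(4*a+3 = 4*b+(4::nat)) = False" "(4*a+4 = 4*b+(3::nat)) = False"
  by presburger+

lemma cm_blk1: "cm (4*a+1) (4*b+1) = (if a = b then cm 1 1 else 0)"
  "cm (4*a+1) (4*b+2) = (if a = b then cm 1 2 else 0)"
  "cm (4*a+1) (4*b+3) = (if a = b then cm 1 3 else 0)"
  "cm (4*a+1) (4*b+4) = (if a = b then cm 1 4 else 0)"
  "cm (4*a+2) (4*b+1) = (if a = b then cm 2 1 else 0)"
  "cm (4*a+2) (4*b+2) = (if a = b then cm 2 2 else 0)"
  "cm (4*a+2) (4*b+3) = (if a = b then cm 2 3 else 0)"
  "cm (4*a+2) (4*b+4) = (if a = b then cm 2 4 else 0)"
  "cm (4*a+3) (4*b+1) = (if a = b then cm 3 1 else 0)"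
  "cm (4*a+3) (4*b+2) = (if a = b then cm 3 2 else 0)"
  "cm (4*a+3) (4*b+3) = (if a = b then cm 3 3 else 0)"
  "cm (4*a+3) (4*b+4) = (if a = b then cm 3 4 else 0)"
  "cm (4*a+4) (4*b+1) = (if a = b then cm 4 1 else 0)"
  "cm (4*a+4) (4*b+2) = (if a = b then cm 4 2 else 0)"
  "cm (4*a+4) (4*b+3) = (if a = b then cm 4 3 else 0)"
  "cm (4*a+4) (4*b+4) = (if a = b then cm 4 4 else 0)"
  by (simp_all add: cm_def pt_def sg_def par4 idx_eq)

lemma cm_blk:
  assumes "i \<in> {1,2,3,4}" "j \<in> {1,2,3,4}"
  shows "cm (4*a+i) (4*b+j) = (if a = b then cm i j else 0)"
  using assms cm_blk1 by auto

lemma off_rng: "off n A \<alpha> \<in> {1,2,3,4}" "off2 n A \<alpha> \<in> {1,2,3,4}"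
  unfolding off_def off2_def by auto

lemma CZ_blk: "CZ n A \<alpha> B \<beta> = (if blk n A = blk n B then
     zc1 n A \<alpha> * zc1 n B \<beta> * cm (off n A \<alpha>) (off n B \<beta>)
   + zc1 n A \<alpha> * zc2 n B \<beta> * cm (off n A \<alpha>) (off2 n B \<beta>)
   + zc2 n A \<alpha> * zc1 n B \<beta> * cm (off2 n A \<alpha>) (off n B \<beta>)
   + zc2 n A \<alpha> * zc2 n B \<beta> * cm (off2 n A \<alpha>) (off2 n B \<beta>) else 0)"
proof -
  have h: "cm (4*blk n A + i) (4*blk n B + j) = (if blk n A = blk n B then cm i j else 0)"
    if "i \<in> {1,2,3,4}" "j \<in> {1,2,3,4}" for i j using cm_blk[OF that] .
  show ?thesis
    unfolding CZ_def unfolding zk1_blk unfolding zk_blk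
    by (simp only: h off_rng) simp
qed

lemma CZ_sym:
  assumes "A < 2*n" "B < 2*n" "\<alpha> \<in> {0,1}" "\<beta> \<in> {0,1}"
  shows "CZ n A \<alpha> B \<beta> + CZ n A \<beta> B \<alpha> = 0"
proof (cases "blk n A = blk n B")
  case False then show ?thesis by (simp add: CZ_blk)
next
  case True
  have c: "cm 1 1 = 0" "cm 1 2 = 4" "cm 1 3 = 0" "cm 1 4 = 0" "cm 2 1 = -4" "cm 2 2 = 0" "cm 2 3 = 0" "cm 2 4 = 0"
    "cm 3 1 = 0" "cm 3 2 = 0" "cm 3 3 = 0" "cm 3 4 = 4" "cm 4 1 = 0" "cm 4 2 = 0" "cm 4 3 = -4" "cm 4 4 = 0"
    by (simp_all add: cm_def pt_def sg_def)
  show ?thesis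
    using assms(3,4) unfolding CZ_blk if_P[OF True]
    by (cases "A < n"; cases "B < n"; cases "\<alpha> = 0"; cases "\<beta> = 0"; simp add: off_def off2_def zc1_def zc2_def c c[unfolded One_nat_def])
qed



definition inv :: "nat set \<Rightarrow> nat set \<Rightarrow> nat" where
  "inv I J = card {(i, j). i \<in> I \<and> j \<in> J \<and> j < i}"

lemma ss_inv: "shuffle_sign I J = (-1) ^ inv I J"
  unfolding shuffle_sign_def inv_def by simp

lemma inv_un_left:
  assumes "finite I1" "finite I2" "finite J" "I1 \<inter> I2 = {}"
  shows "inv (I1 \<union> I2) J = inv I1 J + inv I2 J"
proof -
  have "{(i, j). i \<in> I1 \<union> I2 \<and> j \<in> J \<and> j < i} = {(i, j). i \<in> I1 \<and> j \<in> J \<and> j < i} \<union> {(i, j). i \<in> I2 \<and> j \<in> J \<and> j < i}"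
    by auto
  moreover have "finite {(i, j). i \<in> I1 \<and> j \<in> J \<and> j < i}"
    by (rule finite_subset[of _ "I1 \<times> J"]) (use assms in auto)
  moreover have "finite {(i, j). i \<in> I2 \<and> j \<in> J \<and> j < i}"
    by (rule finite_subset[of _ "I2 \<times> J"]) (use assms in auto)
  ultimately show ?thesis unfolding inv_def using assms(4)
    by (simp add: card_Un_disjoint disjoint_iff)
qed

lemma inv_un_right:
  assumes "finite I" "finite J1" "finite J2" "J1 \<inter> J2 = {}"
  shows "inv I (J1 \<union> J2) = inv I J1 + inv I J2"
proof -
  have "{(i, j). i \<in> I \<and> j \<in> J1 \<union> J2 \<and> j < i} = {(i, j). i \<in> I \<and> j \<in> J1 \<and> j < i} \<union> {(i, j). i \<in> I \<and> j \<in> J2 \<and> j < i}"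
    by auto
  moreover have "finite {(i, j). i \<in> I \<and> j \<in> J1 \<and> j < i}"
    by (rule finite_subset[of _ "I \<times> J1"]) (use assms in auto)
  moreover have "finite {(i, j). i \<in> I \<and> j \<in> J2 \<and> j < i}"
    by (rule finite_subset[of _ "I \<times> J2"]) (use assms in auto)
  ultimately show ?thesis unfolding inv_def using assms(4)
    by (simp add: card_Un_disjoint disjoint_iff)
qed

lemma inv_sing_left: "inv {A} J = card {j\<in>J. j < A}"
proof -
  have "{(i, j). i \<in> {A} \<and> j \<in> J \<and> j < i} = (\<lambda>j. (A, j)) ` {j\<in>J. j < A}" by auto
  then show ?thesis unfolding inv_def by (simp add: card_image inj_on_def)
qed

lemma inv_sing_right: "inv I {A} = card {i\<in>I. A < i}"
proof -
  have "{(i, j). i \<in> I \<and> j \<in> {A} \<and> j < i} = (\<lambda>i. (i, A)) ` {i\<in>I. A < i}" by auto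
  then show ?thesis unfolding inv_def by (simp add: card_image inj_on_def)
qed

lemma sign_anti:
  assumes "finite K" "A \<in> K" "B \<in> K" "A \<noteq> B"
  shows "shuffle_sign {A} (K - {A}) * shuffle_sign {B} (K - {A} - {B})
       = - (shuffle_sign {B} (K - {B}) * shuffle_sign {A} (K - {B} - {A}))"
proof -
  have main: "shuffle_sign {A} (K - {A}) * shuffle_sign {B} (K - {A} - {B})
       = - (shuffle_sign {B} (K - {B}) * shuffle_sign {A} (K - {B} - {A}))"
    if "finite K" "A \<in> K" "B \<in> K" "A < B" for A B K
  proof -
    have e1: "{j \<in> K - {A}. j < A} = {j \<in> K - {A} - {B}. j < A}" using that by auto
    have e2: "{j \<in> K - {B}. j < B} = insert A {j \<in> K - {A} - {B}. j < B}" using that by auto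
    have e3: "K - {B} - {A} = K - {A} - {B}" by auto
    have c2: "card {j \<in> K - {B}. j < B} = Suc (card {j \<in> K - {A} - {B}. j < B})"
      unfolding e2 using that by (subst card_insert_disjoint) auto
    show ?thesis unfolding ss_inv inv_sing_left e1 c2 e3
      by (simp add: power_add)
  qed
  show ?thesis
  proof (cases "A < B")
    case True then show ?thesis using main[of K A B] assms by simp
  next
    case False
    then have "B < A" using assms by simp
    then show ?thesis using main[of K B A] assms by (simp add: algebra_simps)
  qed
qed

lemma sign_a:
  assumes "finite K" "A \<in> K" "I \<subseteq> K - {A}"
  shows "shuffle_sign {A} (K - {A}) * shuffle_sign I (K - {A} - I)
       = shuffle_sign (insert A I) (K - insert A I) * shuffle_sign {A} I"
proof -
  have fI: "finite I" using assms finite_subset by blast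
  have AI: "A \<notin> I" using assms by auto
  have e1: "K - insert A I = K - {A} - I" by auto
  have "insert A I = {A} \<union> I" by simp
  then have i1: "inv (insert A I) (K - {A} - I) = inv {A} (K - {A} - I) + inv I (K - {A} - I)"
    using inv_un_left[of "{A}" I "K - {A} - I"] fI AI assms by auto
  have "K - {A} = (K - {A} - I) \<union> I" using assms by auto
  then have i2: "inv {A} (K - {A}) = inv {A} (K - {A} - I) + inv {A} I"
    using inv_un_right[of "{A}" "K - {A} - I" I] fI assms by auto
  show ?thesis unfolding ss_inv e1 i1 i2 by (simp add: power_add)
qed

lemma sign_b:
  assumes "finite K" "I \<subseteq> K" "A \<in> K - I"
  shows "shuffle_sign {A} (K - {A}) * shuffle_sign I (K - {A} - I)
       = (-1) ^ card I * (shuffle_sign I (K - I) * shuffle_sign {A} (K - I - {A}))"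
proof -
  have fI: "finite I" using assms finite_subset by blast
  have AI: "A \<notin> I" using assms by auto
  have "K - I = (K - {A} - I) \<union> {A}" using assms by auto
  then have i1: "inv I (K - I) = inv I (K - {A} - I) + inv I {A}"
    using inv_un_right[of I "K - {A} - I" "{A}"] fI assms by auto
  have "K - {A} = (K - I - {A}) \<union> I" using assms by auto
  then have i2: "inv {A} (K - {A}) = inv {A} (K - I - {A}) + inv {A} I"
    using inv_un_right[of "{A}" "K - I - {A}" I] fI assms by auto
  have "I = {i\<in>I. i < A} \<union> {i\<in>I. A < i}" using AI by (auto, metis linorder_neqE_nat)
  then have cI: "card I = card {i\<in>I. i < A} + card {i\<in>I. A < i}"
    using fI by (metis (no_types, lifting) card_Un_disjoint disjoint_iff finite_Un mem_Collect_eq order_less_asym)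
  have i1': "inv I (K - I) = inv I (K - {A} - I) + card {i\<in>I. A < i}" using i1 inv_sing_right by simp
  have i2': "inv {A} (K - {A}) = inv {A} (K - I - {A}) + card {i\<in>I. i < A}" using i2 inv_sing_left by simp
  define E where "E = inv {A} (K - {A}) + inv I (K - {A} - I)"
  have ex: "card I + inv I (K - I) + inv {A} (K - I - {A}) = E + 2 * card {i\<in>I. A < i}"
    unfolding E_def using i1' i2' cI by simp
  have "(-1::complex) ^ card I * (shuffle_sign I (K - I) * shuffle_sign {A} (K - I - {A}))
      = (-1) ^ (card I + inv I (K - I) + inv {A} (K - I - {A}))"
    unfolding ss_inv by (simp add: power_add)
  also have "\<dots> = (-1) ^ E" unfolding ex by (simp add: power_add power_mult)
  also have "\<dots> = shuffle_sign {A} (K - {A}) * shuffle_sign I (K - {A} - I)"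
    unfolding E_def ss_inv by (simp add: power_add)
  finally show ?thesis by simp
qed



lemma pair_anti:
  fixes h :: "nat \<Rightarrow> nat \<Rightarrow> complex"
  assumes "finite K" "\<And>A B. A \<in> K \<Longrightarrow> B \<in> K \<Longrightarrow> A \<noteq> B \<Longrightarrow> h A B = - h B A"
  shows "(\<Sum>A\<in>K. \<Sum>B\<in>K-{A}. h A B) = 0"
proof -
  have e: "\<And>A. K - {A} = {B. B \<in> K \<and> A \<noteq> B}" by auto
  have "(\<Sum>A\<in>K. \<Sum>B\<in>K-{A}. h A B) = (\<Sum>B\<in>K. \<Sum>A\<in>{A. A \<in> K \<and> A \<noteq> B}. h A B)"
    unfolding e by (rule sum.swap_restrict) (use assms in auto)
  also have "\<dots> = (\<Sum>B\<in>K. \<Sum>A\<in>K-{B}. - h B A)"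
  proof (intro sum.cong refl)
    fix B A assume "B \<in> K" "A \<in> K - {B}"
    then show "h A B = - h B A" using assms(2)[of A B] by auto
  next
    fix B assume "B \<in> K"
    show "{A. A \<in> K \<and> A \<noteq> B} = K - {B}" by auto
  qed
  also have "\<dots> = - (\<Sum>B\<in>K. \<Sum>A\<in>K-{B}. h B A)" by (simp add: sum_negf)
  finally show ?thesis by simp
qed

lemma sub_finite: "(K::nat set) \<subseteq> {..<2*(n::nat)} \<Longrightarrow> finite K"
  by (rule finite_subset[OF _ finite_lessThan])

lemma dd_expand:
  assumes sm: "\<And>I. smooth_on n \<Omega> (F I)" and x: "x \<in> \<Omega>" and K: "K \<subseteq> {..<2*n}"
  shows "dop n \<alpha> (dop n \<beta> F) K x = (\<Sum>A\<in>K. \<Sum>B\<in>K-{A}.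
     (shuffle_sign {A} (K - {A}) * shuffle_sign {B} (K - {A} - {B})) * Zf n A \<alpha> (Zf n B \<beta> (F (K - {A} - {B}))) x)"
proof -
  have fK: "finite K" using K sub_finite by blast
  have inner: "dop n \<beta> F (K - {A}) = (\<lambda>q. \<Sum>B\<in>K-{A}. shuffle_sign {B} (K - {A} - {B}) * Zf n B \<beta> (F (K - {A} - {B})) q)"
    for A
  proof -
    have "K - {A} \<subseteq> {..<2*n}" using K by auto
    then show ?thesis unfolding dop_def by simp
  qed
  have z: "Zf n A \<alpha> (dop n \<beta> F (K - {A})) x = (\<Sum>B\<in>K-{A}. shuffle_sign {B} (K - {A} - {B}) * Zf n A \<alpha> (Zf n B \<beta> (F (K - {A} - {B}))) x)"
    if "A \<in> K" for A
    unfolding inner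
  proof (rule Zf_sum)
    show "finite (K - {A})" using fK by simp
    show "A < 2*n" using that K by auto
    fix B assume "B \<in> K - {A}"
    then have "B < 2*n" using K by auto
    then show "good n x (Zf n B \<beta> (F (K - {A} - {B})))"
      by (intro good_Zf smooth_good2[OF sm x])
  qed
  show ?thesis
    unfolding dop_def[of n \<alpha>] using K
    by (simp add: z sum_distrib_left mult.assoc)
qed

lemma Zsymm:
  assumes dom: "heis_domain n \<Omega>" and sm: "smooth_on n \<Omega> f" and x: "x \<in> \<Omega>"
    and AB: "A < 2*n" "B < 2*n" and ab: "\<alpha> \<in> {0,1}" "\<beta> \<in> {0,1}"
  shows "Zf n A \<alpha> (Zf n B \<beta> f) x + Zf n A \<beta> (Zf n B \<alpha> f) x
       = Zf n B \<alpha> (Zf n A \<beta> f) x + Zf n B \<beta> (Zf n A \<alpha> f) x"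
proof -
  have 1: "Zf n A \<alpha> (Zf n B \<beta> f) x - Zf n B \<beta> (Zf n A \<alpha> f) x = CZ n A \<alpha> B \<beta> * pd 0 f x"
    by (rule Zcomm[OF dom sm x AB])
  have 2: "Zf n A \<beta> (Zf n B \<alpha> f) x - Zf n B \<alpha> (Zf n A \<beta> f) x = CZ n A \<beta> B \<alpha> * pd 0 f x"
    by (rule Zcomm[OF dom sm x AB])
  have 3: "CZ n A \<alpha> B \<beta> + CZ n A \<beta> B \<alpha> = 0" by (rule CZ_sym[OF AB ab])
  have "(Zf n A \<alpha> (Zf n B \<beta> f) x - Zf n B \<beta> (Zf n A \<alpha> f) x) + (Zf n A \<beta> (Zf n B \<alpha> f) x - Zf n B \<alpha> (Zf n A \<beta> f) x) = 0"
    unfolding 1 2 distrib_right[symmetric] 3 by simp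
  then show ?thesis by (simp add: algebra_simps)
qed

lemma dd_anti:
  assumes dom: "heis_domain n \<Omega>" and sm: "\<And>I. smooth_on n \<Omega> (F I)" and x: "x \<in> \<Omega>"
    and ab: "\<alpha> \<in> {0,1}" "\<beta> \<in> {0,1}"
  shows "dop n \<alpha> (dop n \<beta> F) K x + dop n \<beta> (dop n \<alpha> F) K x = 0"
proof (cases "K \<subseteq> {..<2*n}")
  case False then show ?thesis unfolding dop_def by simp
next
  case K: True
  have fK: "finite K" using K sub_finite by blast
  define \<sigma> where "\<sigma> A B = shuffle_sign {A} (K - {A}) * shuffle_sign {B} (K - {A} - {B})" for A B
  define T where "T A B = Zf n A \<alpha> (Zf n B \<beta> (F (K - {A} - {B}))) x + Zf n A \<beta> (Zf n B \<alpha> (F (K - {A} - {B}))) x" for A B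
  have "dop n \<alpha> (dop n \<beta> F) K x + dop n \<beta> (dop n \<alpha> F) K x = (\<Sum>A\<in>K. \<Sum>B\<in>K-{A}. \<sigma> A B * T A B)"
    unfolding dd_expand[OF sm x K] \<sigma>_def T_def by (simp add: sum.distrib[symmetric] algebra_simps)
  also have "\<dots> = 0"
  proof (rule pair_anti[OF fK])
    fix A B assume AB: "A \<in> K" "B \<in> K" "A \<noteq> B"
    have s: "\<sigma> A B = - \<sigma> B A" unfolding \<sigma>_def by (rule sign_anti[OF fK AB])
    have e: "K - {B} - {A} = K - {A} - {B}" by auto
    have t: "T A B = T B A" unfolding T_def e
      by (rule Zsymm[OF dom sm x _ _ ab]) (use AB K in auto)
    show "\<sigma> A B * T A B = - (\<sigma> B A * T B A)" using s t by simp
  qed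
  finally show ?thesis .
qed



lemma zero_form: "smooth_form n \<Omega> q F \<Longrightarrow> \<not> (I \<subseteq> {..<2*n} \<and> card I = q) \<Longrightarrow> F I x = 0"
  unfolding smooth_form_def by (metis (mono_tags))

lemma form_sm: "smooth_form n \<Omega> q F \<Longrightarrow> smooth_on n \<Omega> (F I)"
  unfolding smooth_form_def by blast

lemma bij_insert: "A \<in> K \<Longrightarrow> bij_betw (insert A) (Pow (K - {A})) {J \<in> Pow K. A \<in> J}"
proof (rule bij_betw_byWitness[where f' = "\<lambda>J. J - {A}"])
qed auto

lemma leibniz:
  assumes hF: "smooth_form n \<Omega> p F" and hG: "smooth_form n \<Omega> q G" and x: "x \<in> \<Omega>"
  shows "dop n \<alpha> (wedge F G) K x = wedge (dop n \<alpha> F) G K x + (-1) ^ p * wedge F (dop n \<alpha> G) K x"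
proof (cases "K \<subseteq> {..<2*n}")
  case False
  have r1: "wedge (dop n \<alpha> F) G K x = 0"
    unfolding wedge_def
  proof (rule sum.neutral, rule ballI)
    fix J assume J: "J \<in> Pow K"
    show "shuffle_sign J (K - J) * dop n \<alpha> F J x * G (K - J) x = 0"
    proof (cases "J \<subseteq> {..<2*n}")
      case True
      then have "\<not> (K - J \<subseteq> {..<2*n})" using False J by auto
      then show ?thesis using zero_form[OF hG] by simp
    qed (simp add: dop_def)
  qed
  have r2: "wedge F (dop n \<alpha> G) K x = 0"
    unfolding wedge_def
  proof (rule sum.neutral, rule ballI)
    fix J assume J: "J \<in> Pow K"
    show "shuffle_sign J (K - J) * F J x * dop n \<alpha> G (K - J) x = 0"
    proof (cases "J \<subseteq> {..<2*n}")
      case True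
      then have "\<not> (K - J \<subseteq> {..<2*n})" using False J by auto
      then show ?thesis by (simp add: dop_def)
    qed (use zero_form[OF hF] in simp)
  qed
  show ?thesis using False r1 r2 by (simp add: dop_def)
next
  case K: True
  have fK: "finite K" using K sub_finite by blast
  let ?s = shuffle_sign
  have gF: "good n x (F I)" for I by (rule smooth_good1[OF form_sm[OF hF] x])
  have gG: "good n x (G I)" for I by (rule smooth_good1[OF form_sm[OF hG] x])
  have wfun: "wedge F G J = (\<lambda>y. \<Sum>I\<in>Pow J. ?s I (J - I) * (F I y * G (J - I) y))" for J
    unfolding wedge_def by (simp add: mult.assoc)
  have zw: "Zf n A \<alpha> (wedge F G (K - {A})) x = (\<Sum>I\<in>Pow (K - {A}). ?s I (K - {A} - I) *
      (Zf n A \<alpha> (F I) x * G (K - {A} - I) x + F I x * Zf n A \<alpha> (G (K - {A} - I)) x))"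
    if A: "A \<in> K" for A
  proof -
    have A2: "A < 2*n" using A K by auto
    have "Zf n A \<alpha> (wedge F G (K - {A})) x = (\<Sum>I\<in>Pow (K - {A}). ?s I (K - {A} - I) * Zf n A \<alpha> (\<lambda>y. F I y * G (K - {A} - I) y) x)"
      unfolding wfun by (rule Zf_sum) (use fK A2 gF gG good_mult in auto)
    then show ?thesis using A2 by (simp add: Zf_mult gF gG)
  qed
  have LHS: "dop n \<alpha> (wedge F G) K x =
     (\<Sum>A\<in>K. \<Sum>I\<in>Pow (K - {A}). ?s {A} (K - {A}) * ?s I (K - {A} - I) * (Zf n A \<alpha> (F I) x * G (K - {A} - I) x))
   + (\<Sum>A\<in>K. \<Sum>I\<in>Pow (K - {A}). ?s {A} (K - {A}) * ?s I (K - {A} - I) * (F I x * Zf n A \<alpha> (G (K - {A} - I)) x))"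
    unfolding dop_def[of n \<alpha> "wedge F G"] using K
    by (simp add: zw sum_distrib_left sum.distrib[symmetric] algebra_simps)
  have R1: "wedge (dop n \<alpha> F) G K x =
     (\<Sum>A\<in>K. \<Sum>I\<in>Pow (K - {A}). ?s {A} (K - {A}) * ?s I (K - {A} - I) * (Zf n A \<alpha> (F I) x * G (K - {A} - I) x))"
  proof -
    define h where "h J A = ?s J (K - J) * (?s {A} (J - {A}) * (Zf n A \<alpha> (F (J - {A})) x * G (K - J) x))" for J A
    have "wedge (dop n \<alpha> F) G K x = (\<Sum>J\<in>Pow K. \<Sum>A\<in>{A. A \<in> K \<and> A \<in> J}. h J A)"
      unfolding wedge_def
    proof (intro sum.cong refl)
      fix J assume J: "J \<in> Pow K"
      then have J2: "J \<subseteq> {..<2*n}" using K by auto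
      have e: "{A. A \<in> K \<and> A \<in> J} = J" using J by auto
      show "?s J (K - J) * dop n \<alpha> F J x * G (K - J) x = (\<Sum>A\<in>{A. A \<in> K \<and> A \<in> J}. h J A)"
        unfolding e h_def dop_def using J2 by (simp add: sum_distrib_left sum_distrib_right mult.assoc)
    qed
    also have "\<dots> = (\<Sum>A\<in>K. \<Sum>J\<in>{J. J \<in> Pow K \<and> A \<in> J}. h J A)"
      by (rule sum.swap_restrict) (use fK in auto)
    also have "\<dots> = (\<Sum>A\<in>K. \<Sum>I\<in>Pow (K - {A}). h (insert A I) A)"
    proof (rule sum.cong[OF refl])
      fix A assume A: "A \<in> K"
      have "{J. J \<in> Pow K \<and> A \<in> J} = {J \<in> Pow K. A \<in> J}" by simp
      then show "(\<Sum>J\<in>{J. J \<in> Pow K \<and> A \<in> J}. h J A) = (\<Sum>I\<in>Pow (K - {A}). h (insert A I) A)"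
        using sum.reindex_bij_betw[OF bij_insert[OF A], of "\<lambda>J. h J A"] by simp
    qed
    also have "\<dots> = (\<Sum>A\<in>K. \<Sum>I\<in>Pow (K - {A}). ?s {A} (K - {A}) * ?s I (K - {A} - I) * (Zf n A \<alpha> (F I) x * G (K - {A} - I) x))"
    proof (intro sum.cong refl)
      fix A I assume A: "A \<in> K" and I: "I \<in> Pow (K - {A})"
      have e1: "insert A I - {A} = I" using I by auto
      have e2: "K - insert A I = K - {A} - I" by auto
      show "h (insert A I) A = ?s {A} (K - {A}) * ?s I (K - {A} - I) * (Zf n A \<alpha> (F I) x * G (K - {A} - I) x)"
        unfolding h_def e1 e2 using sign_a[OF fK A, of I] I by (simp add: e2 mult.assoc)
    qed
    finally show ?thesis .
  qed
  have R2: "(-1) ^ p * wedge F (dop n \<alpha> G) K x =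
     (\<Sum>A\<in>K. \<Sum>I\<in>Pow (K - {A}). ?s {A} (K - {A}) * ?s I (K - {A} - I) * (F I x * Zf n A \<alpha> (G (K - {A} - I)) x))"
  proof -
    define g where "g I A = ?s I (K - I) * (F I x * (?s {A} (K - I - {A}) * Zf n A \<alpha> (G (K - I - {A})) x))" for I A
    have "wedge F (dop n \<alpha> G) K x = (\<Sum>I\<in>Pow K. \<Sum>A\<in>{A. A \<in> K \<and> A \<notin> I}. g I A)"
      unfolding wedge_def
    proof (intro sum.cong refl)
      fix I assume I: "I \<in> Pow K"
      have K2: "K - I \<subseteq> {..<2*n}" using K by auto
      have e: "{A. A \<in> K \<and> A \<notin> I} = K - I" by auto
      show "?s I (K - I) * F I x * dop n \<alpha> G (K - I) x = (\<Sum>A\<in>{A. A \<in> K \<and> A \<notin> I}. g I A)"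
        unfolding e g_def dop_def using K2 by (simp add: sum_distrib_left mult.assoc)
    qed
    also have "\<dots> = (\<Sum>A\<in>K. \<Sum>I\<in>{I. I \<in> Pow K \<and> A \<notin> I}. g I A)"
      by (rule sum.swap_restrict) (use fK in auto)
    also have "\<dots> = (\<Sum>A\<in>K. \<Sum>I\<in>Pow (K - {A}). g I A)"
    proof (rule sum.cong[OF refl])
      fix A assume A: "A \<in> K"
      have "{I. I \<in> Pow K \<and> A \<notin> I} = Pow (K - {A})" by auto
      then show "(\<Sum>I\<in>{I. I \<in> Pow K \<and> A \<notin> I}. g I A) = (\<Sum>I\<in>Pow (K - {A}). g I A)" by simp
    qed
    finally have w: "wedge F (dop n \<alpha> G) K x = (\<Sum>A\<in>K. \<Sum>I\<in>Pow (K - {A}). g I A)" .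
    have t: "(-1) ^ p * g I A = ?s {A} (K - {A}) * ?s I (K - {A} - I) * (F I x * Zf n A \<alpha> (G (K - {A} - I)) x)"
      if A: "A \<in> K" and I: "I \<in> Pow (K - {A})" for A I
    proof (cases "card I = p")
      case True
      have IK: "I \<subseteq> K" "A \<in> K - I" using A I by auto
      have e: "K - I - {A} = K - {A} - I" by auto
      show ?thesis unfolding g_def e using sign_b[OF fK IK] True e
        by (simp add: mult.assoc mult.left_commute)
    next
      case False
      have "F I x = 0" by (rule zero_form[OF hF]) (use False in auto)
      then show ?thesis unfolding g_def by simp
    qed
    show ?thesis unfolding w sum_distrib_left
      by (intro sum.cong refl) (simp add: t)
  qed
  show ?thesis unfolding LHS R1 R2 by simp
qed


theorem proposition1p1:
  fixes n :: nat and \<Omega> :: "(nat \<Rightarrow> real) set" and \<alpha> :: nat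
  assumes "heis_domain n \<Omega>" and "\<alpha> \<in> {0, 1}"
  shows "(\<forall>q F. smooth_form n \<Omega> q F \<longrightarrow>
            (\<forall>K. \<forall>x\<in>\<Omega>. dop n 0 (dop n 0 F) K x = 0 \<and> dop n 1 (dop n 1 F) K x = 0))
       \<and> (\<forall>q F. smooth_form n \<Omega> q F \<longrightarrow>
            (\<forall>K. \<forall>x\<in>\<Omega>. dop n 0 (dop n 1 F) K x = - dop n 1 (dop n 0 F) K x))
       \<and> (\<forall>p q F G. smooth_form n \<Omega> p F \<longrightarrow> smooth_form n \<Omega> q G \<longrightarrow>
            (\<forall>K. \<forall>x\<in>\<Omega>. dop n \<alpha> (wedge F G) K x
                 = wedge (dop n \<alpha> F) G K x + (-1) ^ p * wedge F (dop n \<alpha> G) K x))"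
proof (intro conjI allI impI ballI)
  fix q F K x assume F: "smooth_form n \<Omega> q F" and x: "x \<in> \<Omega>"
  have sm: "\<And>I. smooth_on n \<Omega> (F I)" using form_sm[OF F] .
  have a0: "dop n 0 (dop n 0 F) K x + dop n 0 (dop n 0 F) K x = 0"
    by (rule dd_anti[OF assms(1) sm x]) auto
  have a1: "dop n 1 (dop n 1 F) K x + dop n 1 (dop n 1 F) K x = 0"
    by (rule dd_anti[OF assms(1) sm x]) auto
  show "dop n 0 (dop n 0 F) K x = 0" using a0 by simp
  show "dop n 1 (dop n 1 F) K x = 0" using a1 by simp
next
  fix q F K x assume F: "smooth_form n \<Omega> q F" and x: "x \<in> \<Omega>"
  have sm: "\<And>I. smooth_on n \<Omega> (F I)" using form_sm[OF F] .
  have a: "dop n 0 (dop n 1 F) K x + dop n 1 (dop n 0 F) K x = 0"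
    by (rule dd_anti[OF assms(1) sm x]) auto
  then show "dop n 0 (dop n 1 F) K x = - dop n 1 (dop n 0 F) K x"
    by (simp add: eq_neg_iff_add_eq_0)
next
  fix p q F G K x assume "smooth_form n \<Omega> p F" "smooth_form n \<Omega> q G" "x \<in> \<Omega>"
  then show "dop n \<alpha> (wedge F G) K x = wedge (dop n \<alpha> F) G K x + (-1) ^ p * wedge F (dop n \<alpha> G) K x"
    by (rule leibniz)
qed

end
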